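(* Let $G$ be a finite group with $|G| = mp^k$, where $p$ is a prime, $k \geq 1$, and $m$ is a natural number such that $m/q < p < m$, where $q$ is the smallest prime divisor of $m$. Then a Sylow $p$-subgroup of $G$ is either normal in $G$ or self-normalizing in $G$. *)

theory Defs
  imports Complex_Main "HOL-Algebra.Group_Action" "HOL-Algebra.Sylow" "HOL-Computational_Algebra.Primes"
begin

definition sylow_subgroup :: "('a, 'b) monoid_scheme \<Rightarrow> nat \<Rightarrow> 'a set \<Rightarrow> bool" where
  "sylow_subgroup G p P \<longleftrightarrow> subgroup P G \<and> card P = p ^ multiplicity p (order G)"

end

theory Submission
  imports Defs "HOL-Algebra.Multiplicative_Group" "HOL-Algebra.Zassenhaus"
begin

lemma (in group) sylow_in_normalizer_sub:
  assumes fin: "finite (carrier G)"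
    and P: "subgroup P G" and Q: "subgroup Q G"
    and cP: "card P = p ^ k" and cQ: "card Q = p ^ k"
    and ord: "order G = m * p ^ k" and pm: "coprime p m" and pp: "prime p"
    and PN: "P \<subseteq> normalizer G Q"
  shows "P \<subseteq> Q"
proof
  fix x assume xP: "x \<in> P"
  define N where "N = normalizer G Q"
  let ?N' = "G\<lparr>carrier := N\<rparr>"
  have subN: "subgroup N G" unfolding N_def using normalizer_imp_subgroup Q subgroup.subset by blast
  have nQ: "Q \<lhd> ?N'" unfolding N_def using subgroup_in_normalizer Q by blast
  interpret N': group ?N' using subN subgroup_imp_group by blast
  interpret nq: normal Q ?N' by (rule nQ)
  let ?F = "?N' Mod Q"
  interpret F: group ?F by (rule nq.factorgroup_is_group)
  have xG: "x \<in> carrier G" using xP P subgroup.subset by blast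
  have xN: "x \<in> N" using xP PN N_def by blast
  have finN: "finite N" using fin subN subgroup.subset finite_subset by blast
  have lagN: "card (rcosets\<^bsub>?N'\<^esub> Q) * card Q = card N"
    using N'.lagrange[OF nq.subgroup_axioms] by (simp add: order_def)
  have "card N dvd order G" using lagrange[OF subN] by (metis dvd_triv_right)
  define c where "c = order ?F"
  have cF: "c = card (rcosets\<^bsub>?N'\<^esub> Q)" unfolding c_def order_def FactGroup_def by simp
  have "c * p ^ k dvd m * p ^ k" using lagN cF cQ \<open>card N dvd order G\<close> ord by simp
  hence "c dvd m" using pp by (simp add: prime_gt_0_nat)
  hence cop: "coprime (p ^ k) c" using pm
    by (meson coprime_commute coprime_power_left_iff dvd_refl coprime_divisors)
  define a where "a = Q #>\<^bsub>?N'\<^esub> x"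
  have aF: "a \<in> carrier ?F" unfolding a_def FactGroup_def RCOSETS_def using xN by auto
  have hom: "(\<lambda>y. Q #>\<^bsub>?N'\<^esub> y) \<in> hom ?N' ?F" by (rule nq.r_coset_hom_Mod)
  have Pgrp: "group (G\<lparr>carrier := P\<rparr>)" using P subgroup_imp_group by blast
  have "x [^]\<^bsub>G\<lparr>carrier := P\<rparr>\<^esub> (p ^ k) = \<one>\<^bsub>G\<lparr>carrier := P\<rparr>\<^esub>"
    using group.pow_order_eq_1[OF Pgrp, of x] xP cP by (simp add: order_def)
  hence xpow: "x [^] (p ^ k) = \<one>" by (simp add: nat_pow_consistent[symmetric])
  have "a [^]\<^bsub>?F\<^esub> (p ^ k) = (Q #>\<^bsub>?N'\<^esub> (x [^]\<^bsub>?N'\<^esub> (p ^ k)))"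
    unfolding a_def using hom_nat_pow[OF hom, of x "p^k"] xN N'.is_group F.is_group by simp
  also have "\<dots> = Q #>\<^bsub>?N'\<^esub> \<one>\<^bsub>?N'\<^esub>" using xpow by (simp add: nat_pow_consistent[symmetric])
  also have "\<dots> = \<one>\<^bsub>?F\<^esub>" using hom_one[OF hom] N'.is_group F.is_group by simp
  finally have a1: "a [^]\<^bsub>?F\<^esub> (p ^ k) = \<one>\<^bsub>?F\<^esub>" .
  have a2: "a [^]\<^bsub>?F\<^esub> c = \<one>\<^bsub>?F\<^esub>" unfolding c_def using F.pow_order_eq_1[OF aF] .
  have "F.ord a dvd p ^ k" "F.ord a dvd c" using a1 a2 F.pow_eq_id[OF aF] by auto
  hence "F.ord a = 1" using cop by (meson coprime_common_divisor_nat)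
  hence "a = \<one>\<^bsub>?F\<^esub>" using F.ord_eq_1[OF aF] by simp
  hence "Q #> x = Q" unfolding a_def FactGroup_def by simp
  moreover have "x \<in> Q #> x" using rcos_self[OF xG Q] .
  ultimately show "x \<in> Q" by simp
qed

lemma (in group_action) pgroup_fix_mod:
  assumes finH: "finite (carrier G)" and finE: "finite E"
    and ordH: "order G = p ^ k" and pp: "prime p"
    and YE: "Y \<subseteq> E" and inv: "\<And>g y. g \<in> carrier G \<Longrightarrow> y \<in> Y \<Longrightarrow> \<phi> g y \<in> Y"
  shows "card Y mod p = card {y \<in> Y. \<forall>g\<in>carrier G. \<phi> g y = y} mod p"
proof -
  define Fx where "Fx = {y \<in> Y. \<forall>g\<in>carrier G. \<phi> g y = y}"
  define ind where "ind = (\<lambda>x. if x \<in> Y then 1 else (0::nat))"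
  have orbE: "orbit G \<phi> x \<subseteq> E" if "x \<in> E" for x
    using that element_image unfolding orbit_def by blast
  have orbfin: "finite (orbit G \<phi> x)" if "x \<in> E" for x
    using orbE[OF that] finE finite_subset by blast
  have grp: "group G" using group_hom group_hom.axioms(1) by blast
  have backY: "x \<in> Y" if "x \<in> E" "g \<in> carrier G" "\<phi> g x \<in> Y" for x g
  proof -
    have ig: "inv g \<in> carrier G" using group.inv_closed[OF grp] that by blast
    have "\<phi> (inv g) (\<phi> g x) = \<phi> (inv g \<otimes> g) x"
      using composition_rule[of x "inv g" g] that ig by simp
    also have "\<dots> = \<phi> \<one> x" using that group.l_inv[OF grp] by simp
    also have "\<dots> = x" using id_eq_one[symmetric] that by (metis restrict_apply')
    finally show ?thesis using inv[of "inv g" "\<phi> g x"] that ig by simp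
  qed
  have orbdvd: "card (orbit G \<phi> x) dvd p ^ k" if "x \<in> E" for x
    using orbit_stabilizer_theorem[OF that] ordH by (metis dvd_triv_left)
  have orbterm: "(\<Sum>y\<in>orb. ind y) mod p = (if orb \<subseteq> Y \<and> card orb = 1 then 1 else 0) mod p"
    if orb: "orb \<in> orbits G E \<phi>" for orb
  proof -
    obtain x where x: "x \<in> E" "orb = orbit G \<phi> x" using orb unfolding orbits_def by blast
    show ?thesis
    proof (cases "x \<in> Y")
      case True
      have sub: "orb \<subseteq> Y" using x True inv unfolding orbit_def by blast
      hence s: "(\<Sum>y\<in>orb. ind y) = card orb" unfolding ind_def by (simp add: subset_iff)
      obtain j where j: "card orb = p ^ j" using orbdvd[OF x(1)] x(2) pp
        by (metis divides_primepow_nat)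
      show ?thesis
      proof (cases "j = 0")
        case True then show ?thesis using s j sub by simp
      next
        case False
        then have "p dvd card orb" using j by (simp add: dvd_power)
        moreover have "card orb \<noteq> 1" using False j pp
          by (metis one_less_power prime_gt_1_nat less_irrefl_nat bot_nat_0.not_eq_extremum)
        ultimately show ?thesis using s by simp
      qed
    next
      case False
      have "orb \<inter> Y = {}" using x False backY unfolding orbit_def by blast
      hence "(\<Sum>y\<in>orb. ind y) = 0" unfolding ind_def by (auto intro!: sum.neutral)
      moreover have "\<not> orb \<subseteq> Y" using x False orbit_refl by blast
      ultimately show ?thesis by simp
    qed
  qed
  have "card Y = (\<Sum>x\<in>E. ind x)" unfolding ind_def using YE finE
    by (simp add: sum.If_cases Int_absorb1)
  also have "\<dots> = (\<Sum>orb\<in>orbits G E \<phi>. \<Sum>y\<in>orb. ind y)" using disjoint_sum[OF finE, of ind] by simp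
  finally have cY: "card Y mod p = (\<Sum>orb\<in>orbits G E \<phi>. (\<Sum>y\<in>orb. ind y) mod p) mod p"
    by (simp add: mod_sum_eq)
  have finO: "finite (orbits G E \<phi>)" unfolding orbits_def using finE by simp
  have "(\<Sum>orb\<in>orbits G E \<phi>. (\<Sum>y\<in>orb. ind y) mod p) =
        (\<Sum>orb\<in>orbits G E \<phi>. (if orb \<subseteq> Y \<and> card orb = 1 then 1 else 0) mod p)"
    using orbterm by (rule sum.cong[OF refl])
  hence "card Y mod p = (\<Sum>orb\<in>orbits G E \<phi>. (if orb \<subseteq> Y \<and> card orb = 1 then 1 else 0)) mod p"
    using cY by (simp add: mod_sum_eq)
  also have "(\<Sum>orb\<in>orbits G E \<phi>. (if orb \<subseteq> Y \<and> card orb = 1 then 1 else 0::nat))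
           = card {orb \<in> orbits G E \<phi>. orb \<subseteq> Y \<and> card orb = 1}"
    using finO by (simp add: sum.inter_filter[symmetric])
  also have "{orb \<in> orbits G E \<phi>. orb \<subseteq> Y \<and> card orb = 1} = (\<lambda>y. {y}) ` Fx"
  proof (intro equalityI subsetI)
    fix orb assume "orb \<in> {orb \<in> orbits G E \<phi>. orb \<subseteq> Y \<and> card orb = 1}"
    then obtain x where x: "x \<in> E" "orb = orbit G \<phi> x" "orb \<subseteq> Y" "card orb = 1"
      unfolding orbits_def by blast
    have xo: "x \<in> orb" using x orbit_refl by blast
    then have ox: "orb = {x}" using x(4) by (metis card_1_singletonE singletonD)
    have "\<forall>g\<in>carrier G. \<phi> g x = x" using ox x(2) unfolding orbit_def by blast
    then have "x \<in> Fx" unfolding Fx_def using xo x(3) by blast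
    then show "orb \<in> (\<lambda>y. {y}) ` Fx" using ox by blast
  next
    fix orb assume "orb \<in> (\<lambda>y. {y}) ` Fx"
    then obtain y where y: "y \<in> Fx" "orb = {y}" by blast
    have yE: "y \<in> E" using y YE unfolding Fx_def by blast
    have "orbit G \<phi> y = {y}" using y(1) orbit_refl[OF yE] unfolding Fx_def orbit_def by auto
    hence "orb \<in> orbits G E \<phi>" using y yE unfolding orbits_def by blast
    then show "orb \<in> {orb \<in> orbits G E \<phi>. orb \<subseteq> Y \<and> card orb = 1}"
      using y unfolding Fx_def by auto
  qed
  also have "card ((\<lambda>y. {y}) ` Fx) = card Fx" by (simp add: card_image)
  finally show ?thesis unfolding Fx_def .
qed

theorem lemma1:
  fixes G (structure) and p k m q :: nat and P :: "'a set"
  assumes "group G" and "finite (carrier G)"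
    and "order G = m * p ^ k"
    and "prime p" and "k \<ge> 1"
    and "prime q" and "q dvd m" and "\<forall>r. prime r \<and> r dvd m \<longrightarrow> q \<le> r"
    and "real m / real q < real p" and "p < m"
    and "sylow_subgroup G p P"
  shows "P \<lhd> G \<or> normalizer G P = P"
proof -
  note fin = assms(2) and ord = assms(3) and pp = assms(4) and qp = assms(6)
    and qm = assms(7) and qmin = assms(8) and pm = assms(10)
  interpret group G by (rule assms(1))
  have q0: "q > 0" using qp prime_gt_0_nat by blast
  have mpq: "m < p * q"
  proof -
    have "real m < real p * real q" using assms(9) q0 by (simp add: divide_less_eq)
    then show ?thesis by (metis of_nat_less_iff of_nat_mult)
  qed
  have ndvd: "\<not> p dvd m"
  proof
    assume "p dvd m"
    then obtain t where t: "m = p * t" by blast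
    have "t \<noteq> 1" using t pm by simp
    then obtain r where r: "prime r" "r dvd t" using prime_factor_nat by blast
    have "t > 0" using t pm by (metis gr0I mult_0_right not_less_zero)
    have "r dvd m" using r t by simp
    hence "q \<le> r" using qmin r by blast
    also have "r \<le> t" using r \<open>t > 0\<close> dvd_imp_le by blast
    finally have "p * q \<le> m" using t by simp
    thus False using mpq by simp
  qed
  have cop: "coprime p m" using ndvd pp by (simp add: prime_imp_coprime)
  have m0: "m > 0" using pm by simp
  have mult: "multiplicity p (order G) = k"
    using ord ndvd pp m0
    by (simp add: prime_elem_multiplicity_mult_distrib not_dvd_imp_multiplicity_0 multiplicity_prime_power)
  have P: "subgroup P G" and cP: "card P = p ^ k"
    using assms(11) mult unfolding sylow_subgroup_def by auto
  have PG: "P \<subseteq> carrier G" using P subgroup.subset by blast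
  define E where "E = {H. H \<subseteq> carrier G}"
  define \<phi> where "\<phi> = (\<lambda>g. \<lambda>H\<in>E. g <# H #> inv g)"
  have act: "group_action G E \<phi>" unfolding E_def \<phi>_def by (rule action_by_conjugation_on_power_set)
  have PE: "P \<in> E" using PG E_def by simp
  define S where "S = orbit G \<phi> P"
  define Nz where "Nz = normalizer G P"
  have Nzst: "Nz = stabilizer G \<phi> P" unfolding Nz_def normalizer_def \<phi>_def E_def by simp
  have os: "card S * card Nz = order G"
    using group_action.orbit_stabilizer_theorem[OF act PE] Nzst S_def by simp
  have subNz: "subgroup Nz G" unfolding Nz_def using normalizer_imp_subgroup PG by blast
  have nP: "P \<lhd> G\<lparr>carrier := Nz\<rparr>" unfolding Nz_def using subgroup_in_normalizer P by blast
  have PNz: "P \<subseteq> Nz" using normal_imp_subgroup[OF nP] subgroup.subset by fastforce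
  interpret Nzg: group "G\<lparr>carrier := Nz\<rparr>" using subNz subgroup_imp_group by blast
  define d where "d = card (rcosets\<^bsub>G\<lparr>carrier := Nz\<rparr>\<^esub> P)"
  have cNz: "d * p ^ k = card Nz"
    using Nzg.lagrange[OF normal_imp_subgroup[OF nP]] cP unfolding d_def by (simp add: order_def)
  have Sd: "card S * d = m"
  proof -
    have "card S * d * p ^ k = m * p ^ k" using os cNz ord by (metis mult.assoc)
    thus ?thesis using pp by (simp add: prime_gt_0_nat)
  qed
  have finE: "finite E" unfolding E_def using fin by simp
  have SE: "S \<subseteq> E" unfolding S_def orbit_def using group_action.element_image[OF act] PE by blast
  have finS: "finite S" using SE finE finite_subset by blast
  have PS: "P \<in> S" unfolding S_def using group_action.orbit_refl[OF act PE] .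
  have Pgrp: "subgroup P G" by (rule P)
  have actP: "group_action (G\<lparr>carrier := P\<rparr>) E \<phi>" using group_action.induced_action[OF act P] .
  have invS: "\<phi> h Q \<in> S" if hP: "h \<in> P" and QS: "Q \<in> S" for h Q
  proof -
    obtain g where g: "g \<in> carrier G" "Q = \<phi> g P" using QS unfolding S_def orbit_def by blast
    have hG: "h \<in> carrier G" using hP PG by blast
    have "\<phi> h Q = \<phi> (h \<otimes> g) P" using group_action.composition_rule[OF act PE hG g(1)] g by simp
    thus ?thesis unfolding S_def orbit_def using hG g by blast
  qed
  have fix1: "{y \<in> S. \<forall>g\<in>carrier (G\<lparr>carrier := P\<rparr>). \<phi> g y = y} = {P}"
  proof (intro equalityI subsetI)
    fix Q assume "Q \<in> {y \<in> S. \<forall>g\<in>carrier (G\<lparr>carrier := P\<rparr>). \<phi> g y = y}"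
    then have QS: "Q \<in> S" and fixQ: "\<forall>h\<in>P. \<phi> h Q = Q" by auto
    obtain g where g: "g \<in> carrier G" "Q = \<phi> g P" using QS unfolding S_def orbit_def by blast
    have Qc: "Q = g <# P #> inv g" using g PE unfolding \<phi>_def by simp
    have Qsub: "subgroup Q G" using subgroup_conjugation_is_surj1[of "inv g" P] g(1) P Qc by simp
    have Qimg: "Q = (\<lambda>x. g \<otimes> x \<otimes> inv g) ` P"
      unfolding Qc l_coset_def r_coset_def using g(1) PG by (auto simp: m_assoc)
    have "inj_on (\<lambda>x. g \<otimes> x \<otimes> inv g) P"
      using g(1) PG conjugation_is_inj unfolding inj_on_def by blast
    hence cQ: "card Q = p ^ k" using Qimg cP by (simp add: card_image)
    have QE: "Q \<in> E" using Qsub subgroup.subset E_def by blast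
    have "P \<subseteq> normalizer G Q"
    proof
      fix h assume hP: "h \<in> P"
      have "\<phi> h Q = Q" using fixQ hP by blast
      then show "h \<in> normalizer G Q" using hP PG QE
        unfolding normalizer_def stabilizer_def \<phi>_def E_def by auto
    qed
    hence "P \<subseteq> Q" using sylow_in_normalizer_sub[OF fin P Qsub cP cQ ord cop pp] by blast
    hence "P = Q" using cP cQ Qsub subgroup.subset fin
      by (metis card_subset_eq finite_subset)
    then show "Q \<in> {P}" by simp
  next
    fix Q assume "Q \<in> {P}"
    then have Q: "Q = P" by simp
    have "\<forall>h\<in>P. \<phi> h P = P" using PNz unfolding Nzst stabilizer_def by blast
    then show "Q \<in> {y \<in> S. \<forall>g\<in>carrier (G\<lparr>carrier := P\<rparr>). \<phi> g y = y}" using Q PS by simp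
  qed
  have "card S mod p = card {y \<in> S. \<forall>g\<in>carrier (G\<lparr>carrier := P\<rparr>). \<phi> g y = y} mod p"
  proof (rule group_action.pgroup_fix_mod[OF actP _ finE _ pp SE])
    show "finite (carrier (G\<lparr>carrier := P\<rparr>))" using fin PG finite_subset by simp
    show "order (G\<lparr>carrier := P\<rparr>) = p ^ k" using cP by (simp add: order_def)
  qed (use invS in simp)
  moreover have "p > 1" using pp prime_gt_1_nat by blast
  ultimately have Smod: "card S mod p = 1" using fix1 by simp
  show ?thesis
  proof (cases "card S = 1")
    case True
    hence S1: "S = {P}" using PS by (metis card_1_singletonE singletonD)
    have "P \<lhd> G"
    proof (subst normal_inv_iff, intro conjI P ballI)
      fix x h assume x: "x \<in> carrier G" and h: "h \<in> P"
      have "\<phi> x P \<in> S" unfolding S_def orbit_def using x by blast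
      hence "\<phi> x P = P" using S1 by simp
      moreover have "x \<otimes> h \<otimes> inv x \<in> \<phi> x P"
        using PE h unfolding \<phi>_def l_coset_def r_coset_def by auto
      ultimately show "x \<otimes> h \<otimes> inv x \<in> P" by simp
    qed
    thus ?thesis by simp
  next
    case False
    have "card S > p"
    proof -
      have "card S = p * (card S div p) + 1" using Smod by (metis div_mult_mod_eq mult.commute)
      moreover have "card S div p \<noteq> 0" using False calculation by (metis add_0 mult_0_right)
      ultimately have "p * 1 \<le> p * (card S div p)" and "card S = p * (card S div p) + 1"
        by (simp_all only: mult_le_mono2 Suc_leI bot_nat_0.not_eq_extremum)
      thus ?thesis by linarith
    qed
    have dq: "d < q"
    proof (rule ccontr)
      assume "\<not> d < q"
      hence "card S * q \<le> card S * d" by simp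
      moreover have "p * q < card S * q" using \<open>card S > p\<close> q0 by simp
      ultimately show False using Sd mpq by simp
    qed
    have d1: "d = 1"
    proof (rule ccontr)
      assume "d \<noteq> 1"
      then obtain r where r: "prime r" "r dvd d" using prime_factor_nat by blast
      have "d > 0" using Sd m0 by (metis gr0I mult_0_right less_irrefl)
      have "r dvd m" using r Sd by (metis dvd_mult)
      hence "q \<le> r" using qmin r by blast
      moreover have "r \<le> d" using r \<open>d > 0\<close> dvd_imp_le by blast
      ultimately show False using dq by simp
    qed
    have "card Nz = card P" using cNz d1 cP by simp
    hence "Nz = P" using PNz subNz subgroup.subset fin
      by (metis card_subset_eq finite_subset)
    thus ?thesis unfolding Nz_def by simp
  qed
qed

end
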